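(* Let $\boldsymbol{\mathcal{D}} = \begin{pmatrix}\boldsymbol{W}_p\\ \boldsymbol{U}_f \\ \boldsymbol{Y}_f\end{pmatrix}$ be a data matrix with full row rank and LQ decomposition as described in the context, let $\boldsymbol{Z}:=\begin{pmatrix}\boldsymbol{W}_p\\ \boldsymbol{U}_f\end{pmatrix}$, $\boldsymbol{\Pi}:=\boldsymbol{Z}^+\boldsymbol{Z}$, $\boldsymbol{\Pi}_\perp:=\boldsymbol{I}-\boldsymbol{\Pi}$, and $\lambda_a>0$. Then DeePC with regularization $h(\boldsymbol{a}) = \lambda_a \|\boldsymbol{\Pi}_\perp\boldsymbol{a}\|_2^2$ is equivalent to $\boldsymbol{\gamma}$-DDPC with regularization $\tilde h(\boldsymbol{\gamma}) = \lambda_a \|\boldsymbol{\gamma}_3\|_2^2$.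
   Context: $\boldsymbol{Z}^+$ denotes the Moore–Penrose pseudoinverse. Data: $m$ inputs, $p$ outputs, past horizon $N_p$, future horizon $N_f$, $L=N_p+N_f$, and $\ell$ data trajectories. The data matrix $\boldsymbol{\mathcal{D}}\in\mathbb{R}^{L(m+p)\times\ell}$ has blocks $\boldsymbol{W}_p\in\mathbb{R}^{N_p(m+p)\times\ell}$ (past inputs and outputs), $\boldsymbol{U}_f\in\mathbb{R}^{mN_f\times \ell}$, $\boldsymbol{Y}_f\in\mathbb{R}^{pN_f\times\ell}$ and is assumed to have full row rank. Its LQ decomposition is $\boldsymbol{\mathcal{D}} = \begin{pmatrix} \boldsymbol{L}_{11} & \boldsymbol{0} & \boldsymbol{0} & \boldsymbol{0} \\ \boldsymbol{L}_{21} & \boldsymbol{L}_{22} & \boldsymbol{0} & \boldsymbol{0} \\ \boldsymbol{L}_{31} & \boldsymbol{L}_{32} & \boldsymbol{L}_{33} & \boldsymbol{0} \end{pmatrix}\begin{pmatrix}\boldsymbol{Q}_1\\ \boldsymbol{Q}_2\\ \boldsymbol{Q}_3\\ \boldsymbol{Q}_4\end{pmatrix}$, with non-singular square diagonal blocks $\boldsymbol{L}_{11},\boldsymbol{L}_{22},\boldsymbol{L}_{33}$ (of sizes matching $\boldsymbol{W}_p,\boldsymbol{U}_f,\boldsymbol{Y}_f$) and $\boldsymbol{Q}=\begin{pmatrix}\boldsymbol{Q}_1^\top & \boldsymbol{Q}_2^\top&\boldsymbol{Q}_3^\top&\boldsymbol{Q}_4^\top\end{pmatrix}^\top\in\mathbb{R}^{\ell\times\ell}$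 orthogonal; $\boldsymbol{\gamma}_i := \boldsymbol{Q}_i\boldsymbol{a}$. Given current past I/O data $\boldsymbol{\xi}\in\mathbb{R}^{N_p(m+p)}$, a cost $J(\boldsymbol{\xi},\mathbf{u}_f,\mathbf{y}_f)$ and constraint sets $\mathcal{U}$, $\mathcal{Y}$: DeePC with regularization $h$ is the problem $\min_{\mathbf{u}_f,\mathbf{y}_f,\boldsymbol{a}} J(\boldsymbol{\xi},\mathbf{u}_f,\mathbf{y}_f)+h(\boldsymbol{a})$ s.t. $(\boldsymbol{\xi};\mathbf{u}_f;\mathbf{y}_f)=\boldsymbol{\mathcal{D}}\boldsymbol{a}$, $(\mathbf{u}_f,\mathbf{y}_f)\in\mathcal{U}\times\mathcal{Y}$. $\boldsymbol{\gamma}$-DDPC with regularization $\tilde h$ is the problem $\min_{\mathbf{u}_f,\mathbf{y}_f,\boldsymbol{\gamma}_2,\boldsymbol{\gamma}_3} J(\boldsymbol{\xi},\mathbf{u}_f,\mathbf{y}_f)+\tilde h(\boldsymbol{\gamma})$ s.t. $\boldsymbol{\gamma}_1=\boldsymbol{L}_{11}^{-1}\boldsymbol{\xi}$, $\mathbf{u}_f = \boldsymbol{L}_{21}\boldsymbol{\gamma}_1+\boldsymbol{L}_{22}\boldsymbol{\gamma}_2$, $\mathbf{y}_f=\boldsymbol{L}_{31}\boldsymbol{\gamma}_1+\boldsymbol{L}_{32}\boldsymbol{\gamma}_2+\boldsymbol{L}_{33}\boldsymbol{\gamma}_3$, $(\mathbf{u}_f,\mathbf{y}_f)\in\mathcal{U}\times\mathcal{Y}$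 (i.e., $\boldsymbol{\gamma}_4=\boldsymbol{0}$ is fixed). Two such optimal control problems are called equivalent if, for every $\boldsymbol{\xi}$, they yield the same optimal predicted input/output trajectories $(\mathbf{u}_f^\ast,\mathbf{y}_f^\ast)$ (not necessarily the same optimal cost). *)

theory Defs
  imports "Jordan_Normal_Form.DL_Rank"
begin

definition inv_mat :: "real mat \<Rightarrow> real mat" where
  "inv_mat A = (THE B. B \<in> carrier_mat (dim_row A) (dim_row A) \<and>
       A * B = 1\<^sub>m (dim_row A) \<and> B * A = 1\<^sub>m (dim_row A))"

definition pinv :: "real mat \<Rightarrow> real mat" where
  "pinv Z = (THE X. X \<in> carrier_mat (dim_col Z) (dim_row Z) \<and>
       Z * X * Z = Z \<and> X * Z * X = X \<and>
       transpose_mat (Z * X) = Z * X \<and> transpose_mat (X * Z) = X * Z)"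

definition full_row_rank :: "real mat \<Rightarrow> bool" where
  "full_row_rank A \<longleftrightarrow> vec_space.rank (dim_row A) A = dim_row A"

definition sqnorm :: "real vec \<Rightarrow> real" where
  "sqnorm v = v \<bullet> v"

text \<open>Generic notion: the set of optimal predicted input/output trajectories of an
  optimal control problem with decision variables (u, y, z), where z collects the
  auxiliary variables, feasibility predicate F and cost C.\<close>
definition opt_io :: "('u \<Rightarrow> 'y \<Rightarrow> 'z \<Rightarrow> bool) \<Rightarrow> ('u \<Rightarrow> 'y \<Rightarrow> 'z \<Rightarrow> real) \<Rightarrow> ('u \<times> 'y) set" where
  "opt_io F C = {(u, y). \<exists>z. F u y z \<and>
       (\<forall>u' y' z'. F u' y' z' \<longrightarrow> C u y z \<le> C u' y' z')}"

definition deepc_opt_io ::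
  "real mat \<Rightarrow> nat \<Rightarrow> nat \<Rightarrow> (real vec \<Rightarrow> real vec \<Rightarrow> real vec \<Rightarrow> real) \<Rightarrow> (real vec \<Rightarrow> real)
   \<Rightarrow> real vec set \<Rightarrow> real vec set \<Rightarrow> real vec \<Rightarrow> (real vec \<times> real vec) set" where
  "deepc_opt_io D nu ny J h UU YY \<xi> =
     opt_io (\<lambda>u y a. u \<in> carrier_vec nu \<and> y \<in> carrier_vec ny \<and> a \<in> carrier_vec (dim_col D) \<and>
                     \<xi> @\<^sub>v u @\<^sub>v y = D *\<^sub>v a \<and> u \<in> UU \<and> y \<in> YY)
            (\<lambda>u y a. J \<xi> u y + h a)"

text \<open>gamma-DDPC: decision variables u_f, y_f, gamma_2, gamma_3 (gamma_4 = 0 fixed);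
  gamma_1 = L11^{-1} xi; cost J(xi,u_f,y_f) + htilde(gamma_1,gamma_2,gamma_3).\<close>
definition gddpc_opt_io ::
  "real mat \<Rightarrow> real mat \<Rightarrow> real mat \<Rightarrow> real mat \<Rightarrow> real mat \<Rightarrow> real mat
   \<Rightarrow> (real vec \<Rightarrow> real vec \<Rightarrow> real vec \<Rightarrow> real)
   \<Rightarrow> (real vec \<Rightarrow> real vec \<Rightarrow> real vec \<Rightarrow> real)
   \<Rightarrow> real vec set \<Rightarrow> real vec set \<Rightarrow> real vec \<Rightarrow> (real vec \<times> real vec) set" where
  "gddpc_opt_io L11 L21 L22 L31 L32 L33 J ht UU YY \<xi> =
     (let \<gamma>1 = inv_mat L11 *\<^sub>v \<xi> in
      opt_io (\<lambda>u y (\<gamma>2, \<gamma>3). \<gamma>2 \<in> carrier_vec (dim_col L22) \<and> \<gamma>3 \<in> carrier_vec (dim_col L33) \<and>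
                     u = L21 *\<^sub>v \<gamma>1 + L22 *\<^sub>v \<gamma>2 \<and>
                     y = L31 *\<^sub>v \<gamma>1 + L32 *\<^sub>v \<gamma>2 + L33 *\<^sub>v \<gamma>3 \<and> u \<in> UU \<and> y \<in> YY)
             (\<lambda>u y (\<gamma>2, \<gamma>3). J \<xi> u y + ht \<gamma>1 \<gamma>2 \<gamma>3))"

end

theory Submission
  imports Defs
begin

lemma append_vec_nil: "w \<in> carrier_vec 0 \<Longrightarrow> v @\<^sub>v w = v"
  by (intro eq_vecI) auto

lemma TA:
  fixes A B :: "'a::comm_ring_1 mat"
  assumes A: "A \<in> carrier_mat r1 c" and B: "B \<in> carrier_mat r2 c"
    and u: "u \<in> carrier_vec r1" and w: "w \<in> carrier_vec r2"
  shows "transpose_mat (A @\<^sub>r B) *\<^sub>v (u @\<^sub>v w) = transpose_mat A *\<^sub>v u + transpose_mat B *\<^sub>v w"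
proof -
  have d: "dim_row A = r1" "dim_row B = r2" using A B by auto
  have "transpose_mat (A @\<^sub>r B) = four_block_mat (transpose_mat A) (transpose_mat B) (0\<^sub>m 0 r1) (0\<^sub>m 0 r2)"
    unfolding append_rows_def d
    by (subst transpose_four_block_mat[OF A _ B], auto)
  also have "\<dots> *\<^sub>v (u @\<^sub>v w) = (transpose_mat A *\<^sub>v u + transpose_mat B *\<^sub>v w) @\<^sub>v (0\<^sub>m 0 r1 *\<^sub>v u + 0\<^sub>m 0 r2 *\<^sub>v w)"
    by (rule four_block_mat_mult_vec, insert A B u w, auto)
  also have "\<dots> = transpose_mat A *\<^sub>v u + transpose_mat B *\<^sub>v w"
    by (intro eq_vecI, insert A B u w, auto)
  finally show ?thesis .
qed

lemma vec_ext_mat: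
  fixes A B :: "'a::comm_ring_1 mat"
  assumes A: "A \<in> carrier_mat n m" and B: "B \<in> carrier_mat n m"
    and h: "\<And>v. v \<in> carrier_vec m \<Longrightarrow> A *\<^sub>v v = B *\<^sub>v v"
  shows "A = B"
proof (rule eq_matI)
  fix i j assume i: "i < dim_row B" and j: "j < dim_col B"
  have "(A *\<^sub>v unit_vec m j) $ i = (B *\<^sub>v unit_vec m j) $ i" using h[of "unit_vec m j"] by simp
  thus "A $$ (i, j) = B $$ (i, j)" using A B i j
    by (simp add: scalar_prod_def unit_vec_def if_distrib cong: if_cong) 
qed (use A B in auto)

lemma inv_exists:
  fixes A :: "'a::comm_ring_1 mat"
  assumes A: "A \<in> carrier_mat n n" and inv: "invertible_mat A"
  obtains B where "B \<in> carrier_mat n n" "A * B = 1\<^sub>m n" "B * A = 1\<^sub>m n"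
proof -
  from inv obtain B where "inverts_mat A B" "inverts_mat B A" unfolding invertible_mat_def by auto
  hence AB: "A * B = 1\<^sub>m n" and BA: "B * A = 1\<^sub>m (dim_row B)" using A unfolding inverts_mat_def by auto
  have "dim_col B = n" using arg_cong[OF AB, of dim_col] by simp
  moreover have "dim_row B = n" using arg_cong[OF BA, of dim_col] A by simp
  ultimately show ?thesis using that AB BA by auto
qed

lemma opt_io_sub:
  assumes A: "\<And>u y a. F1 u y a \<Longrightarrow> \<exists>z. F2 u y z \<and> C2 u y z \<le> C1 u y a"
    and B: "\<And>u y z. F2 u y z \<Longrightarrow> \<exists>a. F1 u y a \<and> C1 u y a \<le> C2 u y z"
  shows "opt_io F1 C1 \<subseteq> opt_io F2 C2"
proof
  fix p assume "p \<in> opt_io F1 C1"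
  then obtain u y a where p: "p = (u, y)" and F: "F1 u y a" and opt: "\<forall>u' y' a'. F1 u' y' a' \<longrightarrow> C1 u y a \<le> C1 u' y' a'"
    unfolding opt_io_def by auto
  obtain z where z: "F2 u y z" "C2 u y z \<le> C1 u y a" using A[OF F] by blast
  have "\<forall>u' y' z'. F2 u' y' z' \<longrightarrow> C2 u y z \<le> C2 u' y' z'"
  proof (intro allI impI)
    fix u' y' z' assume "F2 u' y' z'"
    then obtain a' where "F1 u' y' a'" "C1 u' y' a' \<le> C2 u' y' z'" using B by blast
    thus "C2 u y z \<le> C2 u' y' z'" using z(2) opt by (meson order_trans)
  qed
  thus "p \<in> opt_io F2 C2" unfolding opt_io_def p using z(1) by auto
qed

lemma opt_io_eq:
  assumes A: "\<And>u y a. F1 u y a \<Longrightarrow> \<exists>z. F2 u y z \<and> C2 u y z \<le> C1 u y a"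
    and B: "\<And>u y z. F2 u y z \<Longrightarrow> \<exists>a. F1 u y a \<and> C1 u y a \<le> C2 u y z"
  shows "opt_io F1 C1 = opt_io F2 C2"
  using opt_io_sub[of F1 F2 C2 C1, OF A B] opt_io_sub[of F2 F1 C1 C2, OF B A] by blast

lemma self_scalar_nonneg: "(v :: real vec) \<bullet> v \<ge> 0"
  unfolding scalar_prod_def by (auto intro: sum_nonneg)

theorem proposition4:
  fixes n1 n2 n3 l :: nat
    and Wp Uf Yf L11 L21 L22 L31 L32 L33 Q1 Q2 Q3 Q4 :: "real mat"
    and lam :: real
    and J :: "real vec \<Rightarrow> real vec \<Rightarrow> real vec \<Rightarrow> real"
    and UU YY :: "real vec set"
  assumes Wp: "Wp \<in> carrier_mat n1 l" and Uf: "Uf \<in> carrier_mat n2 l" and Yf: "Yf \<in> carrier_mat n3 l"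
    and rank: "full_row_rank (Wp @\<^sub>r Uf @\<^sub>r Yf)"
    and L11: "L11 \<in> carrier_mat n1 n1" and L21: "L21 \<in> carrier_mat n2 n1" and L22: "L22 \<in> carrier_mat n2 n2"
    and L31: "L31 \<in> carrier_mat n3 n1" and L32: "L32 \<in> carrier_mat n3 n2" and L33: "L33 \<in> carrier_mat n3 n3"
    and inv11: "invertible_mat L11" and inv22: "invertible_mat L22" and inv33: "invertible_mat L33"
    and Q1: "Q1 \<in> carrier_mat n1 l" and Q2: "Q2 \<in> carrier_mat n2 l" and Q3: "Q3 \<in> carrier_mat n3 l"
    and Q4: "Q4 \<in> carrier_mat (l - (n1 + n2 + n3)) l"
    and orth1: "transpose_mat (Q1 @\<^sub>r Q2 @\<^sub>r Q3 @\<^sub>r Q4) * (Q1 @\<^sub>r Q2 @\<^sub>r Q3 @\<^sub>r Q4) = 1\<^sub>m l"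
    and orth2: "(Q1 @\<^sub>r Q2 @\<^sub>r Q3 @\<^sub>r Q4) * transpose_mat (Q1 @\<^sub>r Q2 @\<^sub>r Q3 @\<^sub>r Q4) = 1\<^sub>m l"
    and LQ: "Wp @\<^sub>r Uf @\<^sub>r Yf =
       (four_block_mat L11 (0\<^sub>m n1 (n2 + n3)) (L21 @\<^sub>r L31) (four_block_mat L22 (0\<^sub>m n2 n3) L32 L33))
       * (Q1 @\<^sub>r Q2 @\<^sub>r Q3)"
    and lam: "lam > 0"
  shows "\<forall>\<xi> \<in> carrier_vec n1.
     deepc_opt_io (Wp @\<^sub>r Uf @\<^sub>r Yf) n2 n3 J
        (\<lambda>a. lam * sqnorm ((1\<^sub>m l - pinv (Wp @\<^sub>r Uf) * (Wp @\<^sub>r Uf)) *\<^sub>v a)) UU YY \<xi>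
   = gddpc_opt_io L11 L21 L22 L31 L32 L33 J (\<lambda>\<gamma>1 \<gamma>2 \<gamma>3. lam * sqnorm \<gamma>3) UU YY \<xi>"
proof -
  define n4 where "n4 = l - (n1+n2+n3)"
  have Q4c: "Q4 \<in> carrier_mat n4 l" using Q4 n4_def by simp
  define Q where "Q = Q1 @\<^sub>r Q2 @\<^sub>r Q3 @\<^sub>r Q4"
  have Qc0: "Q \<in> carrier_mat (n1+(n2+(n3+n4))) l" using Q1 Q2 Q3 Q4c unfolding Q_def by auto
  have nl: "n1+(n2+(n3+n4)) = l"
  proof -
    have "dim_row (Q * transpose_mat Q) = dim_row (1\<^sub>m l :: real mat)" using orth2 unfolding Q_def by simp
    thus ?thesis using Qc0 by simp
  qed
  have Qc: "Q \<in> carrier_mat l l" using Qc0 nl by simp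
  define Qt where "Qt g1 g2 g3 g4 = transpose_mat Q1 *\<^sub>v g1 + (transpose_mat Q2 *\<^sub>v g2 + (transpose_mat Q3 *\<^sub>v g3 + transpose_mat Q4 *\<^sub>v g4))" for g1 g2 g3 g4
  have QV: "Q *\<^sub>v a = (Q1 *\<^sub>v a) @\<^sub>v (Q2 *\<^sub>v a) @\<^sub>v (Q3 *\<^sub>v a) @\<^sub>v (Q4 *\<^sub>v a)" if a: "a \<in> carrier_vec l" for a
    unfolding Q_def
    apply (subst mat_mult_append[OF Q1 _ a], use Q2 Q3 Q4c in auto)
    apply (subst mat_mult_append[OF Q2 _ a], use Q3 Q4c in auto)
    apply (subst mat_mult_append[OF Q3 Q4c a], simp)
    done
  have QTV: "transpose_mat Q *\<^sub>v (g1 @\<^sub>v g2 @\<^sub>v g3 @\<^sub>v g4) = Qt g1 g2 g3 g4"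
    if g: "g1 \<in> carrier_vec n1" "g2 \<in> carrier_vec n2" "g3 \<in> carrier_vec n3" "g4 \<in> carrier_vec n4" for g1 g2 g3 g4
    unfolding Q_def Qt_def
    apply (subst TA[OF Q1 _ g(1)], use Q2 Q3 Q4c g in auto)
    apply (subst TA[OF Q2 _ g(2)], use Q2 Q3 Q4c g in auto)
    apply (subst TA[OF Q3 Q4c g(3) g(4)], simp)
    done
  have Qtc: "Qt g1 g2 g3 g4 \<in> carrier_vec l"
    if g: "g1 \<in> carrier_vec n1" "g2 \<in> carrier_vec n2" "g3 \<in> carrier_vec n3" "g4 \<in> carrier_vec n4" for g1 g2 g3 g4
    unfolding Qt_def using g Q1 Q2 Q3 Q4c by auto
  have O1: "Qt (Q1 *\<^sub>v a) (Q2 *\<^sub>v a) (Q3 *\<^sub>v a) (Q4 *\<^sub>v a) = a" if a: "a \<in> carrier_vec l" for a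
  proof -
    have "Qt (Q1 *\<^sub>v a) (Q2 *\<^sub>v a) (Q3 *\<^sub>v a) (Q4 *\<^sub>v a) = transpose_mat Q *\<^sub>v (Q *\<^sub>v a)"
      using QV[OF a] QTV Q1 Q2 Q3 Q4c a by simp
    also have "\<dots> = (transpose_mat Q * Q) *\<^sub>v a" using Qc a by simp
    also have "\<dots> = a" using orth1 a unfolding Q_def[symmetric] by simp
    finally show ?thesis .
  qed
  have O2: "Q1 *\<^sub>v Qt g1 g2 g3 g4 = g1 \<and> Q2 *\<^sub>v Qt g1 g2 g3 g4 = g2 \<and> Q3 *\<^sub>v Qt g1 g2 g3 g4 = g3 \<and> Q4 *\<^sub>v Qt g1 g2 g3 g4 = g4"
    if g: "g1 \<in> carrier_vec n1" "g2 \<in> carrier_vec n2" "g3 \<in> carrier_vec n3" "g4 \<in> carrier_vec n4" for g1 g2 g3 g4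
  proof -
    have G: "g1 @\<^sub>v g2 @\<^sub>v g3 @\<^sub>v g4 \<in> carrier_vec l" using g nl by (metis append_carrier_vec)
    have "Q *\<^sub>v Qt g1 g2 g3 g4 = (Q * transpose_mat Q) *\<^sub>v (g1 @\<^sub>v g2 @\<^sub>v g3 @\<^sub>v g4)"
      using QTV[OF g] Qc G by simp
    also have "\<dots> = g1 @\<^sub>v g2 @\<^sub>v g3 @\<^sub>v g4" using orth2 G unfolding Q_def[symmetric] by simp
    finally have "(Q1 *\<^sub>v Qt g1 g2 g3 g4) @\<^sub>v (Q2 *\<^sub>v Qt g1 g2 g3 g4) @\<^sub>v (Q3 *\<^sub>v Qt g1 g2 g3 g4) @\<^sub>v (Q4 *\<^sub>v Qt g1 g2 g3 g4)
       = g1 @\<^sub>v g2 @\<^sub>v g3 @\<^sub>v g4" using QV[OF Qtc[OF g]] by simp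
    moreover have c: "Q1 *\<^sub>v Qt g1 g2 g3 g4 \<in> carrier_vec n1" "Q2 *\<^sub>v Qt g1 g2 g3 g4 \<in> carrier_vec n2"
      "Q3 *\<^sub>v Qt g1 g2 g3 g4 \<in> carrier_vec n3" using Q1 Q2 Q3 Qtc[OF g] by auto
    ultimately show ?thesis using append_vec_eq[OF c(1) g(1)] append_vec_eq[OF c(2) g(2)] append_vec_eq[OF c(3) g(3)] by simp
  qed
  have NORM: "sqnorm (Qt g1 g2 g3 g4) = g1 \<bullet> g1 + g2 \<bullet> g2 + g3 \<bullet> g3 + g4 \<bullet> g4"
    if g: "g1 \<in> carrier_vec n1" "g2 \<in> carrier_vec n2" "g3 \<in> carrier_vec n3" "g4 \<in> carrier_vec n4" for g1 g2 g3 g4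
  proof -
    define G where "G = g1 @\<^sub>v g2 @\<^sub>v g3 @\<^sub>v g4"
    have G: "G \<in> carrier_vec l" using g nl unfolding G_def by (metis append_carrier_vec)
    have x: "Qt g1 g2 g3 g4 = transpose_mat Q *\<^sub>v G" using QTV[OF g] G_def by simp
    have "sqnorm (Qt g1 g2 g3 g4) = (transpose_mat Q *\<^sub>v G) \<bullet> Qt g1 g2 g3 g4" unfolding sqnorm_def x ..
    also have "\<dots> = G \<bullet> (Q *\<^sub>v Qt g1 g2 g3 g4)" by (rule transpose_vec_mult_scalar[OF Qc Qtc[OF g] G])
    also have "Q *\<^sub>v Qt g1 g2 g3 g4 = G" unfolding G_def using QV[OF Qtc[OF g]] O2[OF g] by simp
    also have "G \<bullet> G = g1 \<bullet> g1 + g2 \<bullet> g2 + g3 \<bullet> g3 + g4 \<bullet> g4" unfolding G_def using g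
      by (simp add: scalar_prod_append[of _ n1 _ "n2+(n3+n4)"] scalar_prod_append[of _ n2 _ "n3+n4"] scalar_prod_append[of _ n3 _ n4])
    finally show ?thesis .
  qed

  have LQV: "Wp *\<^sub>v a = L11 *\<^sub>v (Q1 *\<^sub>v a) \<and> Uf *\<^sub>v a = L21 *\<^sub>v (Q1 *\<^sub>v a) + L22 *\<^sub>v (Q2 *\<^sub>v a) \<and>
     Yf *\<^sub>v a = L31 *\<^sub>v (Q1 *\<^sub>v a) + L32 *\<^sub>v (Q2 *\<^sub>v a) + L33 *\<^sub>v (Q3 *\<^sub>v a)" if a: "a \<in> carrier_vec l" for a
  proof -
    define g1 where "g1 = Q1 *\<^sub>v a"
    define g2 where "g2 = Q2 *\<^sub>v a"
    define g3 where "g3 = Q3 *\<^sub>v a"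
    have g: "g1 \<in> carrier_vec n1" "g2 \<in> carrier_vec n2" "g3 \<in> carrier_vec n3"
      unfolding g1_def g2_def g3_def using Q1 Q2 Q3 a by auto
    define F where "F = four_block_mat L22 (0\<^sub>m n2 n3) L32 L33"
    have Fc: "F \<in> carrier_mat (n2+n3) (n2+n3)" unfolding F_def using L22 L33 by auto
    define Lb where "Lb = four_block_mat L11 (0\<^sub>m n1 (n2 + n3)) (L21 @\<^sub>r L31) F"
    have Lbc: "Lb \<in> carrier_mat (n1+(n2+n3)) (n1+(n2+n3))" unfolding Lb_def using L11 Fc by auto
    have Q123: "Q1 @\<^sub>r Q2 @\<^sub>r Q3 \<in> carrier_mat (n1+(n2+n3)) l" using Q1 Q2 Q3 by auto
    have "(Wp *\<^sub>v a) @\<^sub>v (Uf *\<^sub>v a) @\<^sub>v (Yf *\<^sub>v a) = (Wp @\<^sub>r Uf @\<^sub>r Yf) *\<^sub>v a"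
      apply (subst mat_mult_append[OF Wp _ a], use Uf Yf in auto)
      apply (subst mat_mult_append[OF Uf Yf a], simp)
      done
    also have "\<dots> = (Lb * (Q1 @\<^sub>r Q2 @\<^sub>r Q3)) *\<^sub>v a" using LQ unfolding Lb_def F_def by simp
    also have "\<dots> = Lb *\<^sub>v ((Q1 @\<^sub>r Q2 @\<^sub>r Q3) *\<^sub>v a)" using Lbc Q123 a by simp
    also have "(Q1 @\<^sub>r Q2 @\<^sub>r Q3) *\<^sub>v a = g1 @\<^sub>v g2 @\<^sub>v g3" unfolding g1_def g2_def g3_def
      apply (subst mat_mult_append[OF Q1 _ a], use Q2 Q3 in auto)
      apply (subst mat_mult_append[OF Q2 Q3 a], simp)
      done
    also have "Lb *\<^sub>v (g1 @\<^sub>v g2 @\<^sub>v g3) = (L11 *\<^sub>v g1 + 0\<^sub>m n1 (n2 + n3) *\<^sub>v (g2 @\<^sub>v g3)) @\<^sub>v ((L21 @\<^sub>r L31) *\<^sub>v g1 + F *\<^sub>v (g2 @\<^sub>v g3))"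
      unfolding Lb_def by (rule four_block_mat_mult_vec, insert L11 L21 L31 Fc g, auto)
    also have "(L21 @\<^sub>r L31) *\<^sub>v g1 = (L21 *\<^sub>v g1) @\<^sub>v (L31 *\<^sub>v g1)" by (rule mat_mult_append[OF L21 L31 g(1)])
    also have "F *\<^sub>v (g2 @\<^sub>v g3) = (L22 *\<^sub>v g2 + 0\<^sub>m n2 n3 *\<^sub>v g3) @\<^sub>v (L32 *\<^sub>v g2 + L33 *\<^sub>v g3)"
      unfolding F_def by (rule four_block_mat_mult_vec, insert L22 L32 L33 g, auto)
    also have "((L21 *\<^sub>v g1) @\<^sub>v (L31 *\<^sub>v g1)) + ((L22 *\<^sub>v g2 + 0\<^sub>m n2 n3 *\<^sub>v g3) @\<^sub>v (L32 *\<^sub>v g2 + L33 *\<^sub>v g3))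
       = (L21 *\<^sub>v g1 + L22 *\<^sub>v g2) @\<^sub>v (L31 *\<^sub>v g1 + L32 *\<^sub>v g2 + L33 *\<^sub>v g3)"
      by (rule eq_vecI, insert L21 L31 L22 L32 L33 g, auto simp: nth_append)
    also have "L11 *\<^sub>v g1 + 0\<^sub>m n1 (n2 + n3) *\<^sub>v (g2 @\<^sub>v g3) = L11 *\<^sub>v g1"
      by (rule eq_vecI, insert L11 g, auto)
    finally have "(Wp *\<^sub>v a) @\<^sub>v (Uf *\<^sub>v a) @\<^sub>v (Yf *\<^sub>v a) = (L11 *\<^sub>v g1) @\<^sub>v (L21 *\<^sub>v g1 + L22 *\<^sub>v g2) @\<^sub>v (L31 *\<^sub>v g1 + L32 *\<^sub>v g2 + L33 *\<^sub>v g3)" .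
    moreover have c: "Wp *\<^sub>v a \<in> carrier_vec n1" "L11 *\<^sub>v g1 \<in> carrier_vec n1" "Uf *\<^sub>v a \<in> carrier_vec n2"
      "L21 *\<^sub>v g1 + L22 *\<^sub>v g2 \<in> carrier_vec n2" using Wp Uf L11 L21 L22 a g by auto
    ultimately show ?thesis using append_vec_eq[OF c(1) c(2)] append_vec_eq[OF c(3) c(4)] unfolding g1_def g2_def g3_def by simp
  qed
  obtain Li1 where Li1: "Li1 \<in> carrier_mat n1 n1" "L11 * Li1 = 1\<^sub>m n1" "Li1 * L11 = 1\<^sub>m n1"
    using inv_exists[OF L11 inv11] by blast
  obtain Li2 where Li2: "Li2 \<in> carrier_mat n2 n2" "L22 * Li2 = 1\<^sub>m n2" "Li2 * L22 = 1\<^sub>m n2"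
    using inv_exists[OF L22 inv22] by blast
  have invL11: "inv_mat L11 = Li1"
    unfolding inv_mat_def
  proof (rule the_equality)
    show "Li1 \<in> carrier_mat (dim_row L11) (dim_row L11) \<and> L11 * Li1 = 1\<^sub>m (dim_row L11) \<and> Li1 * L11 = 1\<^sub>m (dim_row L11)"
      using Li1 L11 by simp
    fix B assume B: "B \<in> carrier_mat (dim_row L11) (dim_row L11) \<and> L11 * B = 1\<^sub>m (dim_row L11) \<and> B * L11 = 1\<^sub>m (dim_row L11)"
    hence Bc: "B \<in> carrier_mat n1 n1" and BL: "B * L11 = 1\<^sub>m n1" using L11 by auto
    have "B = B * (L11 * Li1)" using Li1 Bc by simp
    also have "\<dots> = (B * L11) * Li1" using Bc L11 Li1 by (simp add: assoc_mult_mat[of _ n1 n1 _ n1 _ n1])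
    also have "\<dots> = Li1" using BL Li1 by simp
    finally show "B = Li1" .
  qed
  define LZ where "LZ = four_block_mat L11 (0\<^sub>m n1 n2) L21 L22"
  define M where "M = four_block_mat Li1 (0\<^sub>m n1 n2) (- (Li2 * L21 * Li1)) Li2"
  have LZc: "LZ \<in> carrier_mat (n1+n2) (n1+n2)" unfolding LZ_def using L11 L22 by auto
  have Mc: "M \<in> carrier_mat (n1+n2) (n1+n2)" unfolding M_def using Li1 Li2 by auto
  have LZM: "LZ * M = 1\<^sub>m (n1+n2)"
  proof -
    have aux: "L22 * (Li2 * L21 * Li1) = L21 * Li1"
    proof -
      have "L22 * (Li2 * L21 * Li1) = L22 * (Li2 * (L21 * Li1))" using Li2 L21 Li1 by simp
      also have "\<dots> = (L22 * Li2) * (L21 * Li1)" using L22 Li2 L21 Li1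
        by (subst assoc_mult_mat[of _ n2 n2 _ n2 _ n1], auto)
      also have "\<dots> = L21 * Li1" using Li2 L21 Li1 by simp
      finally show ?thesis .
    qed
    have "LZ * M = four_block_mat (L11 * Li1 + 0\<^sub>m n1 n2 * (- (Li2 * L21 * Li1))) (L11 * 0\<^sub>m n1 n2 + 0\<^sub>m n1 n2 * Li2)
       (L21 * Li1 + L22 * (- (Li2 * L21 * Li1))) (L21 * 0\<^sub>m n1 n2 + L22 * Li2)"
      unfolding LZ_def M_def by (rule mult_four_block_mat, insert L11 L21 L22 Li1 Li2, auto)
    also have "L21 * Li1 + L22 * (- (Li2 * L21 * Li1)) = 0\<^sub>m n2 n1" 
    proof -
      have "L22 * (- (Li2 * L21 * Li1)) = - (L22 * (Li2 * L21 * Li1))"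
        by (rule uminus_mult_right_mat, insert L22 Li2 L21 Li1, simp)
      hence "L22 * (- (Li2 * L21 * Li1)) = - (L21 * Li1)" using aux by simp
      thus ?thesis using L21 Li1 by (intro eq_matI, auto)
    qed
    finally have "LZ * M = four_block_mat (L11 * Li1 + 0\<^sub>m n1 n2 * (- (Li2 * L21 * Li1))) (L11 * 0\<^sub>m n1 n2 + 0\<^sub>m n1 n2 * Li2)
       (0\<^sub>m n2 n1) (L21 * 0\<^sub>m n1 n2 + L22 * Li2)" .
    moreover have "1\<^sub>m n1 + - 0\<^sub>m n1 n1 = (1\<^sub>m n1 :: real mat)" by (intro eq_matI) auto
    ultimately show ?thesis using Li1 Li2 L11 L21 L22 by simp
  qed
  have MLZ: "M * LZ = 1\<^sub>m (n1+n2)" by (rule mat_mult_left_right_inverse[OF LZc Mc LZM])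

  define Z where "Z = Wp @\<^sub>r Uf"
  define Q12 where "Q12 = Q1 @\<^sub>r Q2"
  have Zc: "Z \<in> carrier_mat (n1+n2) l" unfolding Z_def using Wp Uf by auto
  have Q12c: "Q12 \<in> carrier_mat (n1+n2) l" unfolding Q12_def using Q1 Q2 by auto
  have ZLQ: "Z = LZ * Q12"
  proof (rule vec_ext_mat[OF Zc])
    show "LZ * Q12 \<in> carrier_mat (n1+n2) l" using LZc Q12c by auto
    fix v :: "real vec" assume v: "v \<in> carrier_vec l"
    have "(LZ * Q12) *\<^sub>v v = LZ *\<^sub>v (Q12 *\<^sub>v v)" using LZc Q12c v by simp
    also have "Q12 *\<^sub>v v = (Q1 *\<^sub>v v) @\<^sub>v (Q2 *\<^sub>v v)" unfolding Q12_def by (rule mat_mult_append[OF Q1 Q2 v])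
    also have "LZ *\<^sub>v \<dots> = (L11 *\<^sub>v (Q1 *\<^sub>v v) + 0\<^sub>m n1 n2 *\<^sub>v (Q2 *\<^sub>v v)) @\<^sub>v (L21 *\<^sub>v (Q1 *\<^sub>v v) + L22 *\<^sub>v (Q2 *\<^sub>v v))"
      unfolding LZ_def by (rule four_block_mat_mult_vec, insert L11 L21 L22 Q1 Q2 v, auto)
    also have "L11 *\<^sub>v (Q1 *\<^sub>v v) + 0\<^sub>m n1 n2 *\<^sub>v (Q2 *\<^sub>v v) = L11 *\<^sub>v (Q1 *\<^sub>v v)"
      by (rule eq_vecI, insert L11 Q1 Q2 v, auto)
    also have "(L11 *\<^sub>v (Q1 *\<^sub>v v)) @\<^sub>v (L21 *\<^sub>v (Q1 *\<^sub>v v) + L22 *\<^sub>v (Q2 *\<^sub>v v)) = Z *\<^sub>v v"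
      unfolding Z_def using LQV[OF v] mat_mult_append[OF Wp Uf v] by simp
    finally show "Z *\<^sub>v v = (LZ * Q12) *\<^sub>v v" by simp
  qed
  have QQ: "Q12 * transpose_mat Q12 = 1\<^sub>m (n1+n2)"
  proof (rule vec_ext_mat)
    show "Q12 * transpose_mat Q12 \<in> carrier_mat (n1+n2) (n1+n2)" using Q12c by auto
    show "1\<^sub>m (n1+n2) \<in> carrier_mat (n1+n2) (n1+n2)" by simp
    fix w :: "real vec" assume w: "w \<in> carrier_vec (n1+n2)"
    define w1 where "w1 = vec_first w n1"
    define w2 where "w2 = vec_last w n2"
    have ww: "w = w1 @\<^sub>v w2" unfolding w1_def w2_def using w by simp
    have wc: "w1 \<in> carrier_vec n1" "w2 \<in> carrier_vec n2" unfolding w1_def w2_def by auto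
    have z: "(0\<^sub>v n3 :: real vec) \<in> carrier_vec n3" "(0\<^sub>v n4 :: real vec) \<in> carrier_vec n4" by auto
    have "transpose_mat Q12 *\<^sub>v w = transpose_mat Q1 *\<^sub>v w1 + transpose_mat Q2 *\<^sub>v w2"
      unfolding Q12_def ww by (rule TA[OF Q1 Q2 wc])
    also have "\<dots> = Qt w1 w2 (0\<^sub>v n3) (0\<^sub>v n4)" unfolding Qt_def
      by (rule eq_vecI, insert Q1 Q2 Q3 Q4c wc, auto)
    finally have e: "transpose_mat Q12 *\<^sub>v w = Qt w1 w2 (0\<^sub>v n3) (0\<^sub>v n4)" .
    have "(Q12 * transpose_mat Q12) *\<^sub>v w = Q12 *\<^sub>v (transpose_mat Q12 *\<^sub>v w)" using Q12c w by simp
    also have "\<dots> = w" unfolding e unfolding Q12_def mat_mult_append[OF Q1 Q2 Qtc[OF wc z]]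
      using O2[OF wc z] ww by simp
    finally show "(Q12 * transpose_mat Q12) *\<^sub>v w = 1\<^sub>m (n1+n2) *\<^sub>v w" using w by simp
  qed
  define X0 where "X0 = transpose_mat Q12 * M"
  have X0c: "X0 \<in> carrier_mat l (n1+n2)" unfolding X0_def using Q12c Mc by auto
  have ZX0: "Z * X0 = 1\<^sub>m (n1+n2)"
  proof -
    have "Z * X0 = LZ * (Q12 * (transpose_mat Q12 * M))" unfolding ZLQ X0_def using LZc Q12c Mc
      by (subst assoc_mult_mat[of _ "n1+n2" "n1+n2" _ l _ "n1+n2"], auto)
    also have "Q12 * (transpose_mat Q12 * M) = (Q12 * transpose_mat Q12) * M" using Q12c Mc
      by (subst assoc_mult_mat[of _ "n1+n2" l _ "n1+n2" _ "n1+n2"], auto)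
    finally show ?thesis using QQ LZM Mc by simp
  qed
  have X0Z: "X0 * Z = transpose_mat Q12 * Q12"
  proof -
    have "X0 * Z = transpose_mat Q12 * (M * (LZ * Q12))" unfolding ZLQ X0_def using LZc Q12c Mc
      by (subst assoc_mult_mat[of _ l "n1+n2" _ "n1+n2" _ l], auto)
    also have "M * (LZ * Q12) = (M * LZ) * Q12" using LZc Q12c Mc
      by (subst assoc_mult_mat[of _ "n1+n2" "n1+n2" _ "n1+n2" _ l], auto)
    finally show ?thesis using MLZ Q12c by simp
  qed
  have pinvZ: "pinv Z = X0"
    unfolding pinv_def
  proof (rule the_equality)
    have "Z * X0 * Z = Z" using ZX0 Zc by simp
    moreover have "X0 * Z * X0 = X0" using X0Z X0c Zc ZX0
      by (subst assoc_mult_mat[of _ l "n1+n2" _ l _ "n1+n2"], auto)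
    moreover have "transpose_mat (Z * X0) = Z * X0" using ZX0 by simp
    moreover have "transpose_mat (X0 * Z) = X0 * Z" unfolding X0Z using Q12c
      by (subst transpose_mult[of _ l "n1+n2" _ l], auto)
    ultimately show "X0 \<in> carrier_mat (dim_col Z) (dim_row Z) \<and> Z * X0 * Z = Z \<and> X0 * Z * X0 = X0 \<and>
       transpose_mat (Z * X0) = Z * X0 \<and> transpose_mat (X0 * Z) = X0 * Z" using X0c Zc by auto
    fix X assume "X \<in> carrier_mat (dim_col Z) (dim_row Z) \<and> Z * X * Z = Z \<and> X * Z * X = X \<and>
       transpose_mat (Z * X) = Z * X \<and> transpose_mat (X * Z) = X * Z"
    hence Xc: "X \<in> carrier_mat l (n1+n2)" and P1: "Z * X * Z = Z" and P2: "X * Z * X = X"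
      and P4: "transpose_mat (X * Z) = X * Z" using Zc by auto
    have ZX: "Z * X = 1\<^sub>m (n1+n2)"
    proof -
      have "Z * X = (Z * X) * (Z * X0)" using ZX0 Zc Xc by simp
      also have "\<dots> = ((Z * X) * Z) * X0" using Zc Xc X0c
        by (subst assoc_mult_mat[of _ "n1+n2" "n1+n2" _ l _ "n1+n2"], auto)
      finally show ?thesis using P1 ZX0 by simp
    qed
    define C where "C = transpose_mat LZ * (transpose_mat X * X)"
    have Cc: "C \<in> carrier_mat (n1+n2) (n1+n2)" unfolding C_def using LZc Xc by auto
    have XC: "X = transpose_mat Q12 * C"
    proof -
      have "X = (X * Z) * X" using P2 by simp
      also have "\<dots> = transpose_mat (X * Z) * X" using P4 by simp
      also have "transpose_mat (X * Z) = transpose_mat Z * transpose_mat X"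
        using Xc Zc by (subst transpose_mult[of _ l "n1+n2" _ l], auto)
      also have "transpose_mat Z = transpose_mat Q12 * transpose_mat LZ" unfolding ZLQ
        using LZc Q12c by (subst transpose_mult[of _ "n1+n2" "n1+n2" _ l], auto)
      also have "transpose_mat Q12 * transpose_mat LZ * transpose_mat X * X = transpose_mat Q12 * C"
      proof -
        have i: "(transpose_mat LZ * transpose_mat X) * X = transpose_mat LZ * (transpose_mat X * X)"
          using LZc Xc by (subst assoc_mult_mat[of _ "n1+n2" "n1+n2" _ l _ "n1+n2"], auto)
        have "transpose_mat Q12 * (transpose_mat LZ * transpose_mat X) * X = transpose_mat Q12 * ((transpose_mat LZ * transpose_mat X) * X)"
          using Q12c LZc Xc by (subst assoc_mult_mat[of _ l "n1+n2" _ l _ "n1+n2"], auto)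
        moreover have "transpose_mat Q12 * transpose_mat LZ * transpose_mat X = transpose_mat Q12 * (transpose_mat LZ * transpose_mat X)"
          using Q12c LZc Xc by (subst assoc_mult_mat[of _ l "n1+n2" _ "n1+n2" _ l], auto)
        ultimately show ?thesis unfolding C_def i by simp
      qed
      finally show ?thesis .
    qed
    have "X0 = transpose_mat Q12 * (M * (Z * X))" unfolding X0_def ZX using Mc by simp
    also have "M * (Z * X) = C"
    proof -
      have "LZ * Q12 * (transpose_mat Q12 * C) = LZ * (Q12 * (transpose_mat Q12 * C))" using LZc Q12c Cc
        by (subst assoc_mult_mat[of _ "n1+n2" "n1+n2" _ l _ "n1+n2"], auto)
      also have "Q12 * (transpose_mat Q12 * C) = (Q12 * transpose_mat Q12) * C" using Q12c Cc
        by (subst assoc_mult_mat[of _ "n1+n2" l _ "n1+n2" _ "n1+n2"], auto)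
      also have "LZ * (\<dots>) = LZ * C" using QQ Cc by simp
      also have "M * (LZ * C) = (M * LZ) * C" using Mc LZc Cc
        by (subst assoc_mult_mat[of _ "n1+n2" "n1+n2" _ "n1+n2" _ "n1+n2"], auto)
      finally show ?thesis unfolding ZLQ XC using MLZ Cc by simp
    qed
    finally show "X = X0" using XC by simp
  qed

  have PiV: "(1\<^sub>m l - pinv (Wp @\<^sub>r Uf) * (Wp @\<^sub>r Uf)) *\<^sub>v a = Qt (0\<^sub>v n1) (0\<^sub>v n2) (Q3 *\<^sub>v a) (Q4 *\<^sub>v a)"
    if a: "a \<in> carrier_vec l" for a
  proof -
    have "(1\<^sub>m l - pinv (Wp @\<^sub>r Uf) * (Wp @\<^sub>r Uf)) *\<^sub>v a = (1\<^sub>m l - transpose_mat Q12 * Q12) *\<^sub>v a"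
      unfolding Z_def[symmetric] pinvZ X0Z ..
    also have "\<dots> = a - transpose_mat Q12 *\<^sub>v (Q12 *\<^sub>v a)" using Q12c a
      by (subst minus_mult_distrib_mat_vec[of _ l l], auto)
    also have "Q12 *\<^sub>v a = (Q1 *\<^sub>v a) @\<^sub>v (Q2 *\<^sub>v a)" unfolding Q12_def by (rule mat_mult_append[OF Q1 Q2 a])
    also have "transpose_mat Q12 *\<^sub>v \<dots> = transpose_mat Q1 *\<^sub>v (Q1 *\<^sub>v a) + transpose_mat Q2 *\<^sub>v (Q2 *\<^sub>v a)"
      unfolding Q12_def by (rule TA[OF Q1 Q2], insert Q1 Q2 a, auto)
    also have "a - \<dots> = Qt (Q1 *\<^sub>v a) (Q2 *\<^sub>v a) (Q3 *\<^sub>v a) (Q4 *\<^sub>v a) - (transpose_mat Q1 *\<^sub>v (Q1 *\<^sub>v a) + transpose_mat Q2 *\<^sub>v (Q2 *\<^sub>v a))"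
      using O1[OF a] by simp
    also have "\<dots> = Qt (0\<^sub>v n1) (0\<^sub>v n2) (Q3 *\<^sub>v a) (Q4 *\<^sub>v a)" unfolding Qt_def
      by (rule eq_vecI, insert Q1 Q2 Q3 Q4c a, auto)
    finally show ?thesis .
  qed
  have HN: "sqnorm ((1\<^sub>m l - pinv (Wp @\<^sub>r Uf) * (Wp @\<^sub>r Uf)) *\<^sub>v a) = (Q3 *\<^sub>v a) \<bullet> (Q3 *\<^sub>v a) + (Q4 *\<^sub>v a) \<bullet> (Q4 *\<^sub>v a)"
    if a: "a \<in> carrier_vec l" for a
    unfolding PiV[OF a] using Q3 Q4c a by (subst NORM, auto)
  have "Wp @\<^sub>r Uf @\<^sub>r Yf \<in> carrier_mat (n1+(n2+n3)) l" using Wp Uf Yf by auto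
  hence dimD: "dim_col (Wp @\<^sub>r Uf @\<^sub>r Yf) = l" by auto
  have dimL: "dim_col L22 = n2" "dim_col L33 = n3" using L22 L33 by auto
  show ?thesis
  proof (intro ballI)
    fix \<xi> :: "real vec" assume \<xi>: "\<xi> \<in> carrier_vec n1"
    define g1 where "g1 = Li1 *\<^sub>v \<xi>"
    have g1c: "g1 \<in> carrier_vec n1" unfolding g1_def using Li1 \<xi> by auto
    have L11g1: "L11 *\<^sub>v g1 = \<xi>" unfolding g1_def using L11 Li1 \<xi>
      by (subst assoc_mult_mat_vec[symmetric, of _ n1 n1 _ n1], auto)
    have Dsplit: "(Wp @\<^sub>r Uf @\<^sub>r Yf) *\<^sub>v a = (Wp *\<^sub>v a) @\<^sub>v (Uf *\<^sub>v a) @\<^sub>v (Yf *\<^sub>v a)" if a: "a \<in> carrier_vec l" for a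
      apply (subst mat_mult_append[OF Wp _ a], use Uf Yf in auto)
      apply (subst mat_mult_append[OF Uf Yf a], simp)
      done
    have FA: "Q1 *\<^sub>v a = g1 \<and> u = L21 *\<^sub>v g1 + L22 *\<^sub>v (Q2 *\<^sub>v a) \<and> y = L31 *\<^sub>v g1 + L32 *\<^sub>v (Q2 *\<^sub>v a) + L33 *\<^sub>v (Q3 *\<^sub>v a)"
      if a: "a \<in> carrier_vec l" and u: "u \<in> carrier_vec n2" and y: "y \<in> carrier_vec n3"
        and e: "\<xi> @\<^sub>v u @\<^sub>v y = (Wp @\<^sub>r Uf @\<^sub>r Yf) *\<^sub>v a" for a u y
    proof -
      have c: "Wp *\<^sub>v a \<in> carrier_vec n1" "Uf *\<^sub>v a \<in> carrier_vec n2" using Wp Uf a by auto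
      have "\<xi> = Wp *\<^sub>v a \<and> u = Uf *\<^sub>v a \<and> y = Yf *\<^sub>v a"
        using e unfolding Dsplit[OF a] using append_vec_eq[OF \<xi> c(1)] append_vec_eq[OF u c(2)] by simp
      hence e2: "\<xi> = L11 *\<^sub>v (Q1 *\<^sub>v a)" "u = L21 *\<^sub>v (Q1 *\<^sub>v a) + L22 *\<^sub>v (Q2 *\<^sub>v a)"
        "y = L31 *\<^sub>v (Q1 *\<^sub>v a) + L32 *\<^sub>v (Q2 *\<^sub>v a) + L33 *\<^sub>v (Q3 *\<^sub>v a)" using LQV[OF a] by auto
      have "g1 = (Li1 * L11) *\<^sub>v (Q1 *\<^sub>v a)" unfolding g1_def e2(1) using Li1 L11 Q1 a
        by (subst assoc_mult_mat_vec[of _ n1 n1 _ n1], auto)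
      hence "g1 = Q1 *\<^sub>v a" using Li1 Q1 a by simp
      thus ?thesis using e2 by simp
    qed
    define FD where "FD = (\<lambda>u y a. u \<in> carrier_vec n2 \<and> y \<in> carrier_vec n3 \<and> a \<in> carrier_vec (dim_col (Wp @\<^sub>r Uf @\<^sub>r Yf)) \<and>
                     \<xi> @\<^sub>v u @\<^sub>v y = (Wp @\<^sub>r Uf @\<^sub>r Yf) *\<^sub>v a \<and> u \<in> UU \<and> y \<in> YY)"
    define CD where "CD = (\<lambda>u y a. J \<xi> u y + lam * sqnorm ((1\<^sub>m l - pinv (Wp @\<^sub>r Uf) * (Wp @\<^sub>r Uf)) *\<^sub>v a))"
    define FG where "FG = (\<lambda>u y (\<gamma>2, \<gamma>3). \<gamma>2 \<in> carrier_vec (dim_col L22) \<and> \<gamma>3 \<in> carrier_vec (dim_col L33) \<and>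
                     u = L21 *\<^sub>v (inv_mat L11 *\<^sub>v \<xi>) + L22 *\<^sub>v \<gamma>2 \<and>
                     y = L31 *\<^sub>v (inv_mat L11 *\<^sub>v \<xi>) + L32 *\<^sub>v \<gamma>2 + L33 *\<^sub>v \<gamma>3 \<and> u \<in> UU \<and> y \<in> YY)"
    define CG where "CG = (\<lambda>u y (\<gamma>2::real vec, \<gamma>3::real vec). J \<xi> u y + lam * sqnorm \<gamma>3)"
    have eqD: "deepc_opt_io (Wp @\<^sub>r Uf @\<^sub>r Yf) n2 n3 J
        (\<lambda>a. lam * sqnorm ((1\<^sub>m l - pinv (Wp @\<^sub>r Uf) * (Wp @\<^sub>r Uf)) *\<^sub>v a)) UU YY \<xi> = opt_io FD CD"
      unfolding deepc_opt_io_def FD_def CD_def ..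
    have eqG: "gddpc_opt_io L11 L21 L22 L31 L32 L33 J (\<lambda>\<gamma>1 \<gamma>2 \<gamma>3. lam * sqnorm \<gamma>3) UU YY \<xi> = opt_io FG CG"
      unfolding gddpc_opt_io_def Let_def FG_def CG_def by simp
    show "deepc_opt_io (Wp @\<^sub>r Uf @\<^sub>r Yf) n2 n3 J
        (\<lambda>a. lam * sqnorm ((1\<^sub>m l - pinv (Wp @\<^sub>r Uf) * (Wp @\<^sub>r Uf)) *\<^sub>v a)) UU YY \<xi>
      = gddpc_opt_io L11 L21 L22 L31 L32 L33 J (\<lambda>\<gamma>1 \<gamma>2 \<gamma>3. lam * sqnorm \<gamma>3) UU YY \<xi>"
      unfolding eqD eqG
    proof (rule opt_io_eq)
      fix u y a assume F: "FD u y a"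
      hence a: "a \<in> carrier_vec l" and u: "u \<in> carrier_vec n2" and y: "y \<in> carrier_vec n3"
        and e: "\<xi> @\<^sub>v u @\<^sub>v y = (Wp @\<^sub>r Uf @\<^sub>r Yf) *\<^sub>v a" and uy: "u \<in> UU" "y \<in> YY"
        unfolding FD_def dimD by auto
      note fa = FA[OF a u y e]
      have "FG u y (Q2 *\<^sub>v a, Q3 *\<^sub>v a)" unfolding FG_def invL11 g1_def[symmetric]
        using fa uy Q2 Q3 a dimL by auto
      moreover have "CG u y (Q2 *\<^sub>v a, Q3 *\<^sub>v a) \<le> CD u y a" unfolding CG_def CD_def HN[OF a] unfolding sqnorm_def
        using lam self_scalar_nonneg[of "Q4 *\<^sub>v a"] by simp
      ultimately show "\<exists>z. FG u y z \<and> CG u y z \<le> CD u y a" by blast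
    next
      fix u y z assume F: "FG u y z"
      obtain g2 g3 where z: "z = (g2, g3)" by (cases z)
      have g: "g2 \<in> carrier_vec n2" "g3 \<in> carrier_vec n3" and u: "u = L21 *\<^sub>v g1 + L22 *\<^sub>v g2"
        and y: "y = L31 *\<^sub>v g1 + L32 *\<^sub>v g2 + L33 *\<^sub>v g3" and uy: "u \<in> UU" "y \<in> YY"
        using F unfolding FG_def z invL11 g1_def[symmetric] dimL by auto
      have z4: "(0\<^sub>v n4 :: real vec) \<in> carrier_vec n4" by simp
      define a where "a = Qt g1 g2 g3 (0\<^sub>v n4)"
      have a: "a \<in> carrier_vec l" unfolding a_def by (rule Qtc[OF g1c g z4])
      note o2 = O2[OF g1c g z4, folded a_def]
      have "\<xi> @\<^sub>v u @\<^sub>v y = (Wp @\<^sub>r Uf @\<^sub>r Yf) *\<^sub>v a"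
        unfolding Dsplit[OF a] using LQV[OF a] o2 u y L11g1 by simp
      hence "FD u y a" unfolding FD_def dimD using a u y uy g g1c L21 L22 L31 L32 L33 by auto
      moreover have "CD u y a \<le> CG u y z" unfolding CG_def CD_def HN[OF a] unfolding sqnorm_def z using o2 by simp
      ultimately show "\<exists>a. FD u y a \<and> CD u y a \<le> CG u y z" by blast
    qed
  qed

qed

end
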